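(* Let ${}^*$ be a nonstandard enlargement. Then there is an infinite nonstandard natural number $k\in{}^*\mathbb N$ such that ${}^*\sin(kt)$ is infinitesimal for all standard reals $t$.
   Context: A nonstandard universe is an embedding ${}^*$ of the superstructure $V(X)$ over a base set $X\supseteq\mathbb R$ into a superstructure $V(Y)$ with ${}^*X=Y$, ${}^*x=x$ for $x\in X$, $A\subsetneq{}^*A$ for every infinite $A\subseteq X$, satisfying transfer for bounded ($\Sigma_0$) formulas. A set $B\in V(Y)$ is hyperfinite if $B\in{}^*P^{\mathrm{fin}}(A)$ for some $A\in V(X)$, where $P^{\mathrm{fin}}(A)$ is the set of finite subsets of $A$. The universe is an enlargement if for every $A\in V(X)\setminus X$ there is a hyperfinite $B$ with $\{{}^*a:a\in A\}\subseteq B$. A nonstandard natural number is infinite if it is not standard; a nonstandard real is infinitesimal if its absolute value is below every standard $1/n$. *)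

theory Defs
  imports Complex_Main
begin

text \<open>A superstructure V(X) over a base set X of urelements (of type 'a) is represented
on a HOL type 'v: atm embeds the base set as the atoms, els gives the elements
(members) of an object.\<close>

record ('a, 'v) sstr =
  base :: "'a set"
  atm  :: "'a \<Rightarrow> 'v"
  els  :: "'v \<Rightarrow> 'v set"

definition isAtom :: "('a, 'v) sstr \<Rightarrow> 'v \<Rightarrow> bool" where
  "isAtom S v \<longleftrightarrow> v \<in> atm S ` base S"

primrec lev :: "('a, 'v) sstr \<Rightarrow> nat \<Rightarrow> 'v set" where
  "lev S 0 = atm S ` base S"
| "lev S (Suc n) = lev S n \<union> {v. \<not> isAtom S v \<and> els S v \<subseteq> lev S n}"

text \<open>S represents (up to isomorphism) the full superstructure V(X) = \<Union>n. V_n(X):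
atoms are distinct, atoms have no members, every object lies in some level,
sets are extensional, and every subset of a level is represented by a set.\<close>
definition superstructure :: "('a, 'v) sstr \<Rightarrow> bool" where
  "superstructure S \<longleftrightarrow>
     inj_on (atm S) (base S)
   \<and> (\<forall>v. isAtom S v \<longrightarrow> els S v = {})
   \<and> (\<forall>v. \<exists>n. v \<in> lev S n)
   \<and> (\<forall>v w. \<not> isAtom S v \<longrightarrow> \<not> isAtom S w \<longrightarrow> els S v = els S w \<longrightarrow> v = w)
   \<and> (\<forall>n A. A \<subseteq> lev S n \<longrightarrow> (\<exists>v. \<not> isAtom S v \<and> els S v = A))"

definition code :: "('a, 'v) sstr \<Rightarrow> 'v set \<Rightarrow> 'v" where
  "code S A = (THE v. \<not> isAtom S v \<and> els S v = A)"

datatype 'c tm = Var nat | Cst 'c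

datatype 'c fm =
    Mem "'c tm" "'c tm"
  | Eq "'c tm" "'c tm"
  | Neg "'c fm"
  | Conj "'c fm" "'c fm"
  | BAll nat "'c tm" "'c fm"   \<comment> \<open>\<forall>x_n \<in> t. \<phi>\<close>

primrec evt :: "(nat \<Rightarrow> 'v) \<Rightarrow> 'v tm \<Rightarrow> 'v" where
  "evt env (Var n) = env n"
| "evt env (Cst c) = c"

primrec sat :: "('a, 'v) sstr \<Rightarrow> (nat \<Rightarrow> 'v) \<Rightarrow> 'v fm \<Rightarrow> bool" where
  "sat S env (Mem a b) = (evt env a \<in> els S (evt env b))"
| "sat S env (Eq a b) = (evt env a = evt env b)"
| "sat S env (Neg \<phi>) = (\<not> sat S env \<phi>)"
| "sat S env (Conj \<phi> \<psi>) = (sat S env \<phi> \<and> sat S env \<psi>)"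
| "sat S env (BAll n t \<phi>) = (\<forall>x \<in> els S (evt env t). sat S (env(n := x)) \<phi>)"

text \<open>star : V(X) \<rightarrow> V(Y); rl embeds the reals into the base set X (X \<supseteq> \<real>).\<close>
definition nonstandard_universe ::
  "('a, 'v) sstr \<Rightarrow> ('a, 'w) sstr \<Rightarrow> ('v \<Rightarrow> 'w) \<Rightarrow> (real \<Rightarrow> 'a) \<Rightarrow> bool" where
  "nonstandard_universe S T star rl \<longleftrightarrow>
     superstructure S \<and> superstructure T
   \<and> inj rl \<and> range rl \<subseteq> base S
   \<and> base S \<subseteq> base T
   \<and> els T (star (code S (atm S ` base S))) = atm T ` base T
   \<and> (\<forall>x \<in> base S. star (atm S x) = atm T x)
   \<and> (\<forall>A. A \<subseteq> base S \<longrightarrow> infinite A \<longrightarrow>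
          atm T ` A \<subset> els T (star (code S (atm S ` A))))
   \<and> (\<forall>\<phi> env. sat S env \<phi> \<longleftrightarrow> sat T (star \<circ> env) (map_fm star \<phi>))"

text \<open>B is hyperfinite iff B \<in> *P^fin(A) for some set A \<in> V(X).\<close>
definition hyperfinite :: "('a, 'v) sstr \<Rightarrow> ('a, 'w) sstr \<Rightarrow> ('v \<Rightarrow> 'w) \<Rightarrow> 'w \<Rightarrow> bool" where
  "hyperfinite S T star B \<longleftrightarrow>
     (\<exists>A. \<not> isAtom S A \<and>
        B \<in> els T (star (code S {s. \<not> isAtom S s \<and> finite (els S s) \<and> els S s \<subseteq> els S A})))"

definition enlargement :: "('a, 'v) sstr \<Rightarrow> ('a, 'w) sstr \<Rightarrow> ('v \<Rightarrow> 'w) \<Rightarrow> bool" where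
  "enlargement S T star \<longleftrightarrow>
     (\<forall>A. \<not> isAtom S A \<longrightarrow> (\<exists>B. hyperfinite S T star B \<and> star ` els S A \<subseteq> els T B))"

definition isPair :: "('a, 'v) sstr \<Rightarrow> 'v \<Rightarrow> 'v \<Rightarrow> 'v \<Rightarrow> bool" where
  "isPair S p a b \<longleftrightarrow> (\<exists>s1 s2. \<not> isAtom S p \<and> \<not> isAtom S s1 \<and> \<not> isAtom S s2 \<and>
      els S p = {s1, s2} \<and> els S s1 = {a} \<and> els S s2 = {a, b})"

abbreviation ratom :: "('a, 'v) sstr \<Rightarrow> (real \<Rightarrow> 'a) \<Rightarrow> real \<Rightarrow> 'v" where
  "ratom S rl x \<equiv> atm S (rl x)"

definition graph1 :: "('a, 'v) sstr \<Rightarrow> (real \<Rightarrow> 'a) \<Rightarrow> (real \<Rightarrow> real) \<Rightarrow> 'v" where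
  "graph1 S rl f = code S {p. \<exists>x. isPair S p (ratom S rl x) (ratom S rl (f x))}"

definition graph2 :: "('a, 'v) sstr \<Rightarrow> (real \<Rightarrow> 'a) \<Rightarrow> (real \<Rightarrow> real \<Rightarrow> real) \<Rightarrow> 'v" where
  "graph2 S rl f = code S {p. \<exists>x y q. isPair S q (ratom S rl x) (ratom S rl y) \<and>
                                    isPair S p q (ratom S rl (f x y))}"

definition rel2 :: "('a, 'v) sstr \<Rightarrow> (real \<Rightarrow> 'a) \<Rightarrow> (real \<Rightarrow> real \<Rightarrow> bool) \<Rightarrow> 'v" where
  "rel2 S rl R = code S {p. \<exists>x y. R x y \<and> isPair S p (ratom S rl x) (ratom S rl y)}"

definition starApp1 ::
  "('a, 'v) sstr \<Rightarrow> ('a, 'w) sstr \<Rightarrow> ('v \<Rightarrow> 'w) \<Rightarrow> (real \<Rightarrow> 'a) \<Rightarrow> (real \<Rightarrow> real) \<Rightarrow> 'w \<Rightarrow> 'w \<Rightarrow> bool" where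
  "starApp1 S T star rl f a b \<longleftrightarrow> (\<exists>p \<in> els T (star (graph1 S rl f)). isPair T p a b)"

definition starApp2 ::
  "('a, 'v) sstr \<Rightarrow> ('a, 'w) sstr \<Rightarrow> ('v \<Rightarrow> 'w) \<Rightarrow> (real \<Rightarrow> 'a) \<Rightarrow> (real \<Rightarrow> real \<Rightarrow> real)
     \<Rightarrow> 'w \<Rightarrow> 'w \<Rightarrow> 'w \<Rightarrow> bool" where
  "starApp2 S T star rl f a b c \<longleftrightarrow>
     (\<exists>p \<in> els T (star (graph2 S rl f)). \<exists>q. isPair T q a b \<and> isPair T p q c)"

definition starRel ::
  "('a, 'v) sstr \<Rightarrow> ('a, 'w) sstr \<Rightarrow> ('v \<Rightarrow> 'w) \<Rightarrow> (real \<Rightarrow> 'a) \<Rightarrow> (real \<Rightarrow> real \<Rightarrow> bool)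
     \<Rightarrow> 'w \<Rightarrow> 'w \<Rightarrow> bool" where
  "starRel S T star rl R a b \<longleftrightarrow> (\<exists>p \<in> els T (star (rel2 S rl R)). isPair T p a b)"

definition starNat :: "('a, 'v) sstr \<Rightarrow> ('a, 'w) sstr \<Rightarrow> ('v \<Rightarrow> 'w) \<Rightarrow> (real \<Rightarrow> 'a) \<Rightarrow> 'w set" where
  "starNat S T star rl = els T (star (code S (atm S ` rl ` \<nat>)))"

definition starReal :: "('a, 'v) sstr \<Rightarrow> ('a, 'w) sstr \<Rightarrow> ('v \<Rightarrow> 'w) \<Rightarrow> (real \<Rightarrow> 'a) \<Rightarrow> 'w set" where
  "starReal S T star rl = els T (star (code S (atm S ` range rl)))"

text \<open>A nonstandard real x is infinitesimal: *|x| *< 1/n for every standard n \<ge> 1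
(standard reals are fixed by *, so *(1/n) is the atom 1/n).\<close>
definition infinitesimal ::
  "('a, 'v) sstr \<Rightarrow> ('a, 'w) sstr \<Rightarrow> ('v \<Rightarrow> 'w) \<Rightarrow> (real \<Rightarrow> 'a) \<Rightarrow> 'w \<Rightarrow> bool" where
  "infinitesimal S T star rl x \<longleftrightarrow>
     x \<in> starReal S T star rl \<and>
     (\<forall>n::nat. n \<ge> 1 \<longrightarrow> (\<exists>a. starApp1 S T star rl abs x a \<and>
         starRel S T star rl (<) a (atm T (rl (1 / real n)))))"

end

theory Submission
  imports Defs "HOL-Analysis.Kronecker_Approximation_Theorem"
begin


lemma abs_sin_shift_int: "\<bar>sin (z + of_int m * pi)\<bar> = \<bar>sin z\<bar>"
proof -
  have s: "sin (of_int m * pi) = 0" by (simp add: sin_times_pi_eq_0)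
  have "(cos (of_int m * pi))^2 = 1" using sin_cos_squared_add[of "of_int m * pi"] s by simp
  hence c: "\<bar>cos (of_int m * pi)\<bar> = 1" by (auto simp add: power2_eq_1_iff)
  show ?thesis by (simp add: sin_add s abs_mult c)
qed

lemma arith_main:
  fixes X :: "real set"
  assumes fin: "finite X"
  shows "\<exists>K::nat. real K \<notin> X \<and> (\<forall>x\<in>X. \<forall>y\<in>X. y > 0 \<longrightarrow> \<bar>sin (real K * x)\<bar> < y)"
proof -
  define \<delta> where "\<delta> = Min ({y\<in>X. y > 0} \<union> {1})"
  have dpos: "\<delta> > 0" unfolding \<delta>_def using fin by (subst Min_gr_iff) auto
  have dle: "\<delta> \<le> y" if "y \<in> X" "y > 0" for y unfolding \<delta>_def using fin that by (intro Min_le) auto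
  obtain L :: nat where L: "\<And>x. x \<in> X \<Longrightarrow> x < real L" "L > 0"
  proof -
    define M where "M = Max (abs ` X \<union> {0})"
    have "\<bar>x\<bar> \<le> M" if "x \<in> X" for x unfolding M_def using fin that by (intro Max_ge) auto
    moreover obtain L :: nat where "M < real L" using reals_Archimedean2 by blast
    ultimately show ?thesis using that[of "L+1"] by force
  qed
  obtain xs where xs: "set xs = X" using fin finite_list by blast
  define n where "n = length xs"
  define \<theta> where "\<theta> i = xs ! i / pi" for i
  obtain N :: nat where N: "real L * pi / \<delta> < real N" using reals_Archimedean2 by blast
  have Npos: "N > 0" using N dpos L(2) by (cases "N = 0") (auto simp: divide_simps pi_gt_zero, smt (verit) mult_pos_pos of_nat_0_less_iff pi_gt_zero)
  obtain q p where q: "0 < q" "q \<le> int (N^n)"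
    and qp: "\<And>i. i<n \<Longrightarrow> \<bar>of_int q * \<theta> i - of_int(p i)\<bar> < 1/N"
    using Dirichlet_approx_simult[OF Npos, of n \<theta>] by blast
  define K where "K = L * nat q"
  have Kge: "real K \<ge> real L" unfolding K_def using q by (simp add: mult_le_cancel_left1)
  show ?thesis
  proof (intro exI conjI ballI impI)
    show "real K \<notin> X" using L(1) Kge by force
  next
    fix x y assume x: "x \<in> X" and y: "y \<in> X" "y > 0"
    obtain i where i: "i < n" "xs ! i = x" using x xs n_def by (metis in_set_conv_nth)
    define e where "e = of_int q * \<theta> i - of_int (p i)"
    have e: "\<bar>e\<bar> < 1 / N" using qp[OF i(1)] e_def by simp
    have "real K * x = real L * pi * e + of_int (int L * p i) * pi"
      unfolding K_def e_def \<theta>_def using i q by (simp add: field_simps)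
    hence "\<bar>sin (real K * x)\<bar> = \<bar>sin (real L * pi * e)\<bar>" using abs_sin_shift_int[of "real L * pi * e" "int L * p i"] by simp
    also have "\<dots> \<le> \<bar>real L * pi * e\<bar>" by (rule abs_sin_x_le_abs_x)
    also have "\<dots> = real L * pi * \<bar>e\<bar>" by (simp add: abs_mult)
    also have "\<dots> \<le> real L * pi * (1 / N)" using e L(2) by (intro mult_left_mono) (auto simp: pi_gt_zero)
    also have "\<dots> < \<delta>" using N Npos dpos by (simp add: field_simps)
    also have "\<dots> \<le> y" using dle y by simp
    finally show "\<bar>sin (real K * x)\<bar> < y" .
  qed
qed


lemma lev_SucI: "\<not> isAtom S v \<Longrightarrow> els S v \<subseteq> lev S n \<Longrightarrow> v \<in> lev S (Suc n)" by simp

lemma lev_SucE: "v \<in> lev S (Suc n) \<Longrightarrow> (v \<in> lev S n \<Longrightarrow> P) \<Longrightarrow> (\<not> isAtom S v \<Longrightarrow> els S v \<subseteq> lev S n \<Longrightarrow> P) \<Longrightarrow> P"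
  by auto

declare lev.simps(2)[simp del]


lemma lev_Suc_sub: "lev S n \<subseteq> lev S (Suc n)" unfolding lev.simps(2) by (rule Un_upper1)

lemma lev_mono: "m \<le> n \<Longrightarrow> lev S m \<subseteq> lev S n"
proof (induction n)
  case 0 thus ?case by simp
next
  case (Suc n) thus ?case using lev_Suc_sub[of S n] by (metis le_Suc_eq order_refl subset_trans)
qed

lemma els_lev_aux: "v \<in> lev S (Suc n) \<Longrightarrow> \<not> isAtom S v \<Longrightarrow> els S v \<subseteq> lev S n"
proof (induction n arbitrary: v)
  case 0
  from 0(1) show ?case
  proof (rule lev_SucE)
    assume "v \<in> lev S 0" thus ?thesis using 0(2) by (simp add: isAtom_def)
  qed
next
  case (Suc n)
  from Suc.prems(1) show ?case
  proof (rule lev_SucE)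
    assume "v \<in> lev S (Suc n)"
    hence "els S v \<subseteq> lev S n" using Suc.IH Suc.prems(2) by simp
    thus ?thesis using lev_Suc_sub[of S n] by (rule subset_trans)
  qed
qed

lemma ss_atoms_empty: "superstructure S \<Longrightarrow> isAtom S v \<Longrightarrow> els S v = {}"
  unfolding superstructure_def by (elim conjE) (erule allE, erule mp)
lemma ss_ext: "superstructure S \<Longrightarrow> \<not> isAtom S v \<Longrightarrow> \<not> isAtom S w \<Longrightarrow> els S v = els S w \<Longrightarrow> v = w"
  unfolding superstructure_def by (elim conjE) (erule allE[of _ v], erule allE[of _ w], simp)
lemma ss_full: "superstructure S \<Longrightarrow> A \<subseteq> lev S n \<Longrightarrow> \<exists>v. \<not> isAtom S v \<and> els S v = A"
  unfolding superstructure_def by (elim conjE) (erule allE[of _ n], erule allE[of _ A], erule mp)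
lemma ss_lev: "superstructure S \<Longrightarrow> \<exists>n. v \<in> lev S n"
  unfolding superstructure_def by (elim conjE) (erule allE[of _ v])
lemma ss_inj: "superstructure S \<Longrightarrow> inj_on (atm S) (base S)"
  unfolding superstructure_def by (elim conjE)

lemma code_els:
  assumes "superstructure S" "A \<subseteq> lev S n"
  shows "\<not> isAtom S (code S A) \<and> els S (code S A) = A"
proof -
  from ss_full[OF assms] obtain v where v: "\<not> isAtom S v" "els S v = A" by blast
  have u: "w = v" if "\<not> isAtom S w \<and> els S w = A" for w
  proof -
    from that have "\<not> isAtom S w" "els S w = els S v" using v(2) by auto
    thus ?thesis using ss_ext[OF assms(1) _ v(1)] by blast
  qed
  have "(THE v. \<not> isAtom S v \<and> els S v = A) = v"
    by (rule the_equality) (use v u in blast)+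
  thus ?thesis using v unfolding code_def by simp
qed

lemma code_els_eq: "superstructure S \<Longrightarrow> A \<subseteq> lev S n \<Longrightarrow> els S (code S A) = A"
  using code_els by blast

lemma isPair_lev:
  assumes "isPair S p a b" "a \<in> lev S n" "b \<in> lev S n"
  shows "p \<in> lev S (Suc (Suc n))"
proof -
  from assms(1) obtain s1 s2 where s: "\<not> isAtom S p" "\<not> isAtom S s1" "\<not> isAtom S s2"
      "els S p = {s1, s2}" "els S s1 = {a}" "els S s2 = {a, b}" unfolding isPair_def by blast
  have "s1 \<in> lev S (Suc n)" "s2 \<in> lev S (Suc n)" using s assms by (auto intro!: lev_SucI)
  thus ?thesis using s assms by (auto intro!: lev_SucI)
qed

lemma pair_exists:
  assumes "superstructure S" "a \<in> lev S n" "b \<in> lev S n"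
  shows "\<exists>p. isPair S p a b"
proof -
  define s1 where "s1 = code S {a}"
  define s2 where "s2 = code S {a, b}"
  have 1: "\<not> isAtom S s1 \<and> els S s1 = {a}" unfolding s1_def using assms by (intro code_els) auto
  have 2: "\<not> isAtom S s2 \<and> els S s2 = {a, b}" unfolding s2_def using assms by (intro code_els) auto
  have "s1 \<in> lev S (Suc n)" "s2 \<in> lev S (Suc n)" using 1 2 assms by (auto intro!: lev_SucI)
  hence 3: "\<not> isAtom S (code S {s1, s2}) \<and> els S (code S {s1, s2}) = {s1, s2}"
    using assms by (intro code_els[where n="Suc n"]) auto
  show ?thesis unfolding isPair_def using 1 2 3 by blast
qed

lemma isPair_mem:
  "isPair U p a b \<Longrightarrow> (\<exists>s1\<in>els U p. a \<in> els U s1) \<and> (\<exists>s2\<in>els U p. b \<in> els U s2)"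
  unfolding isPair_def by auto

lemma ratom_lev0: "rl x \<in> base S \<Longrightarrow> ratom S rl x \<in> lev S 0" by simp

lemma els_graph1:
  assumes "superstructure S" "range rl \<subseteq> base S"
  shows "els S (graph1 S rl f) = {p. \<exists>x. isPair S p (ratom S rl x) (ratom S rl (f x))}"
proof -
  have "p \<in> lev S 2" if "isPair S p (ratom S rl x) (ratom S rl y)" for p x y
    using isPair_lev[OF that, of 0] assms by (simp add: numeral_2_eq_2 image_subset_iff)
  thus ?thesis unfolding graph1_def using assms by (intro code_els_eq[where n=2]) (auto simp del: lev.simps)
qed

lemma els_rel2:
  assumes "superstructure S" "range rl \<subseteq> base S"
  shows "els S (rel2 S rl R) = {p. \<exists>x y. R x y \<and> isPair S p (ratom S rl x) (ratom S rl y)}"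
proof -
  have "p \<in> lev S 2" if "isPair S p (ratom S rl x) (ratom S rl y)" for p x y
    using isPair_lev[OF that, of 0] assms by (simp add: numeral_2_eq_2 image_subset_iff)
  thus ?thesis unfolding rel2_def using assms by (intro code_els_eq[where n=2]) (auto simp del: lev.simps)
qed

lemma els_graph2:
  assumes "superstructure S" "range rl \<subseteq> base S"
  shows "els S (graph2 S rl f) = {p. \<exists>x y q. isPair S q (ratom S rl x) (ratom S rl y) \<and>
                                    isPair S p q (ratom S rl (f x y))}"
proof -
  have "p \<in> lev S 4" if "isPair S q (ratom S rl x) (ratom S rl y)" "isPair S p q (ratom S rl z)" for p q x y z
  proof -
    have "q \<in> lev S 2" using isPair_lev[OF that(1), of 0] assms by (simp add: numeral_2_eq_2 image_subset_iff)
    moreover have "ratom S rl z \<in> lev S 2" using assms lev_mono[of 0 2 S] by (auto simp: image_subset_iff)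
    ultimately show ?thesis using isPair_lev[OF that(2), of 2] by (simp add: numeral_eq_Suc)
  qed
  hence "{p. \<exists>x y q. isPair S q (ratom S rl x) (ratom S rl y) \<and>
                                    isPair S p q (ratom S rl (f x y))} \<subseteq> lev S 4"
    by (intro subsetI, elim CollectE exE conjE) assumption
  from code_els_eq[OF assms(1) this] show ?thesis unfolding graph2_def .
qed

lemma els_code_atoms:
  assumes "superstructure S" "A \<subseteq> base S"
  shows "els S (code S (atm S ` A)) = atm S ` A"
proof -
  have "atm S ` A \<subseteq> lev S 0" using assms(2) by auto
  from code_els_eq[OF assms(1) this] show ?thesis .
qed



definition FOr :: "'c fm \<Rightarrow> 'c fm \<Rightarrow> 'c fm" where "FOr a b = Neg (Conj (Neg a) (Neg b))"
definition FImp :: "'c fm \<Rightarrow> 'c fm \<Rightarrow> 'c fm" where "FImp a b = Neg (Conj a (Neg b))"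
definition FBEx :: "nat \<Rightarrow> 'c tm \<Rightarrow> 'c fm \<Rightarrow> 'c fm" where "FBEx n t a = Neg (BAll n t (Neg a))"

lemma sat_FOr[simp]: "sat U env (FOr a b) = (sat U env a \<or> sat U env b)" by (simp add: FOr_def)
lemma sat_FImp[simp]: "sat U env (FImp a b) = (sat U env a \<longrightarrow> sat U env b)" by (simp add: FImp_def)
lemma sat_FBEx[simp]: "sat U env (FBEx n t a) = (\<exists>x\<in>els U (evt env t). sat U (env(n:=x)) a)"
  by (simp add: FBEx_def)

lemma map_FOr[simp]: "map_fm f (FOr a b) = FOr (map_fm f a) (map_fm f b)" by (simp add: FOr_def)
lemma map_FImp[simp]: "map_fm f (FImp a b) = FImp (map_fm f a) (map_fm f b)" by (simp add: FImp_def)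
lemma map_FBEx[simp]: "map_fm f (FBEx n t a) = FBEx n (map_tm f t) (map_fm f a)" by (simp add: FBEx_def)

primrec tmb :: "nat \<Rightarrow> 'c tm \<Rightarrow> bool" where
  "tmb m (Var n) = (n < m)"
| "tmb m (Cst c) = True"

lemma evt_upd: "tmb m t \<Longrightarrow> m \<le> n \<Longrightarrow> evt (env(n := x)) t = evt env t"
  by (cases t) auto

definition PairF :: "nat \<Rightarrow> 'c tm \<Rightarrow> 'c tm \<Rightarrow> 'c tm \<Rightarrow> 'c fm" where
  "PairF m p a b =
    FBEx m p (FBEx (m+1) p (Conj (BAll (m+2) p (FOr (Eq (Var (m+2)) (Var m)) (Eq (Var (m+2)) (Var (m+1)))))
     (Conj (BAll (m+2) (Var m) (Eq (Var (m+2)) a)) (Conj (Mem a (Var m))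
     (Conj (BAll (m+2) (Var (m+1)) (FOr (Eq (Var (m+2)) a) (Eq (Var (m+2)) b)))
       (Conj (Mem a (Var (m+1))) (Mem b (Var (m+1)))))))))"

lemma map_PairF[simp]: "map_fm f (PairF m p a b) = PairF m (map_tm f p) (map_tm f a) (map_tm f b)"
  by (simp add: PairF_def)

lemma isPair_alt:
  assumes "\<And>v. isAtom U v \<Longrightarrow> els U v = {}"
  shows "isPair U p a b \<longleftrightarrow> (\<exists>s1\<in>els U p. \<exists>s2\<in>els U p. (\<forall>x\<in>els U p. x = s1 \<or> x = s2) \<and>
     (\<forall>y\<in>els U s1. y = a) \<and> a \<in> els U s1 \<and> (\<forall>y\<in>els U s2. y = a \<or> y = b) \<and> a \<in> els U s2 \<and> b \<in> els U s2)"
  (is "?L \<longleftrightarrow> ?R")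
proof
  assume ?L
  then obtain s1 s2 where s: "els U p = {s1, s2}" "els U s1 = {a}" "els U s2 = {a, b}"
    unfolding isPair_def by blast
  show ?R by (rule bexI[of _ s1], rule bexI[of _ s2]) (simp_all add: s)
next
  assume ?R
  then obtain s1 s2 where s: "s1\<in>els U p" "s2\<in>els U p" "\<forall>x\<in>els U p. x = s1 \<or> x = s2"
     "\<forall>y\<in>els U s1. y = a" "a \<in> els U s1" "\<forall>y\<in>els U s2. y = a \<or> y = b" "a \<in> els U s2" "b \<in> els U s2"
    by blast
  have "\<not> isAtom U p" using assms[of p] s(1) by auto
  moreover have "\<not> isAtom U s1" using assms[of s1] s(5) by auto
  moreover have "\<not> isAtom U s2" using assms[of s2] s(7) by auto
  moreover have "els U p = {s1, s2}" using s(1-3) by blast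
  moreover have "els U s1 = {a}" using s(4,5) by blast
  moreover have "els U s2 = {a, b}" using s(6-8) by blast
  ultimately show ?L unfolding isPair_def by blast
qed

lemma sat_PairF:
  assumes "\<And>v. isAtom U v \<Longrightarrow> els U v = {}" "tmb m p" "tmb m a" "tmb m b"
  shows "sat U env (PairF m p a b) \<longleftrightarrow> isPair U (evt env p) (evt env a) (evt env b)"
  unfolding PairF_def using assms(2-4)
  by (simp add: evt_upd isPair_alt[OF assms(1)])



definition bigF :: "'c \<Rightarrow> 'c \<Rightarrow> 'c \<Rightarrow> 'c \<Rightarrow> 'c \<Rightarrow> 'c \<Rightarrow> 'c \<Rightarrow> 'c \<Rightarrow> 'c fm" where
  "bigF PF NN RR G2 GS GA Lt INV =
   BAll 0 (Cst PF) (FBEx 1 (Cst NN) (BAll 2 (Var 0) (Conj (Neg (Eq (Var 1) (Var 2))) (FImp (Mem (Var 2) (Cst RR))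
    (FBEx 3 (Cst G2) (FBEx 4 (Var 3) (FBEx 5 (Var 4) (FBEx 6 (Var 3) (FBEx 7 (Var 6)
     (Conj (PairF 16 (Var 3) (Var 5) (Var 7)) (Conj (PairF 16 (Var 5) (Var 1) (Var 2))
      (FBEx 8 (Cst GS) (FBEx 9 (Var 8) (FBEx 10 (Var 9) (Conj (PairF 16 (Var 8) (Var 7) (Var 10)) (Conj (Mem (Var 10) (Cst RR))
       (FBEx 11 (Cst GA) (FBEx 12 (Var 11) (FBEx 13 (Var 12) (Conj (PairF 16 (Var 11) (Var 10) (Var 13))
        (BAll 14 (Var 0) (FImp (Mem (Var 14) (Cst INV)) (FBEx 15 (Cst Lt) (PairF 16 (Var 15) (Var 13) (Var 14)))))))))))))))))))))))))"

lemma map_bigF: "map_fm f (bigF PF NN RR G2 GS GA Lt INV) =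
   bigF (f PF) (f NN) (f RR) (f G2) (f GS) (f GA) (f Lt) (f INV)"
  by (simp add: bigF_def)

lemma sat_bigF:
  assumes at: "\<And>v. isAtom U v \<Longrightarrow> els U v = {}"
  shows "sat U env (bigF PF NN RR G2 GS GA Lt INV) \<longleftrightarrow>
    (\<forall>F\<in>els U PF. \<exists>k\<in>els U NN. \<forall>t\<in>els U F. k \<noteq> t \<and> (t \<in> els U RR \<longrightarrow>
      (\<exists>p\<in>els U G2. \<exists>s1\<in>els U p. \<exists>q\<in>els U s1. \<exists>s2\<in>els U p. \<exists>kt\<in>els U s2.
         isPair U p q kt \<and> isPair U q k t \<and>
         (\<exists>p'\<in>els U GS. \<exists>s2'\<in>els U p'. \<exists>s\<in>els U s2'. isPair U p' kt s \<and> s \<in> els U RR \<and>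
           (\<exists>p''\<in>els U GA. \<exists>s2''\<in>els U p''. \<exists>a\<in>els U s2''. isPair U p'' s a \<and>
              (\<forall>r\<in>els U F. r \<in> els U INV \<longrightarrow> (\<exists>p'''\<in>els U Lt. isPair U p''' a r)))))))"
  unfolding bigF_def by (simp add: sat_PairF[OF at])

lemma std_side:
  assumes ssS: "superstructure S" and rlb: "range rl \<subseteq> base S" and injrl: "inj rl"
    and A': "\<not> isAtom S A'"
  defines "PF \<equiv> code S {s. \<not> isAtom S s \<and> finite (els S s) \<and> els S s \<subseteq> els S A'}"
    and "NN \<equiv> code S (atm S ` rl ` \<nat>)" and "RR \<equiv> code S (atm S ` range rl)"
    and "INV \<equiv> code S (atm S ` rl ` {y. \<exists>n::nat. n \<ge> 1 \<and> y = 1 / real n})"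
  shows "sat S env (bigF PF NN RR (graph2 S rl (*)) (graph1 S rl sin) (graph1 S rl abs) (rel2 S rl (<)) INV)"
proof (subst sat_bigF, erule ss_atoms_empty[OF ssS], intro ballI)
  let ?r = "\<lambda>x. atm S (rl x)"
  have r0: "?r x \<in> lev S 0" for x using rlb by auto
  have injr: "inj ?r"
  proof (rule injI)
    fix x y assume "?r x = ?r y"
    hence "rl x = rl y" using inj_onD[OF ss_inj[OF ssS]] rlb by blast
    thus "x = y" using injrl by (rule injD[rotated])
  qed
  obtain m where m: "A' \<in> lev S m" using ss_lev[OF ssS] by blast
  have "m \<noteq> 0" proof assume "m = 0" thus False using m A' by (simp add: isAtom_def) qed
  then obtain m' where m': "m = Suc m'" by (cases m) auto
  have elsA: "els S A' \<subseteq> lev S m'" using els_lev_aux[of A' S m'] m m' A' by simp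
  have "{s. \<not> isAtom S s \<and> finite (els S s) \<and> els S s \<subseteq> els S A'} \<subseteq> lev S (Suc m')"
    using elsA by (auto intro!: lev_SucI)
  hence elsPF: "els S PF = {s. \<not> isAtom S s \<and> finite (els S s) \<and> els S s \<subseteq> els S A'}"
    unfolding PF_def by (rule code_els_eq[OF ssS])
  have elsNN: "els S NN = atm S ` rl ` \<nat>" unfolding NN_def using rlb by (intro els_code_atoms[OF ssS]) auto
  have elsRR: "els S RR = atm S ` range rl" unfolding RR_def using rlb by (intro els_code_atoms[OF ssS]) auto
  have elsINV: "els S INV = atm S ` rl ` {y. \<exists>n::nat. n \<ge> 1 \<and> y = 1 / real n}"
    unfolding INV_def using rlb by (intro els_code_atoms[OF ssS]) auto
  note G2 = els_graph2[OF ssS rlb] and G1 = els_graph1[OF ssS rlb] and Lt = els_rel2[OF ssS rlb]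
  fix F assume "F \<in> els S PF"
  hence finF: "finite (els S F)" using elsPF by auto
  define X where "X = ?r -` els S F"
  have finX: "finite X" unfolding X_def using finF injr by (rule finite_vimageI)
  obtain K :: nat where K: "real K \<notin> X" "\<And>x y. x\<in>X \<Longrightarrow> y\<in>X \<Longrightarrow> y > 0 \<Longrightarrow> \<bar>sin (real K * x)\<bar> < y"
    using arith_main[OF finX] by blast
  let ?k = "?r (real K)"
  show "\<exists>k\<in>els S NN. \<forall>t\<in>els S F. k \<noteq> t \<and> (t \<in> els S RR \<longrightarrow>
      (\<exists>p\<in>els S (graph2 S rl (*)). \<exists>s1\<in>els S p. \<exists>q\<in>els S s1. \<exists>s2\<in>els S p. \<exists>kt\<in>els S s2.
         isPair S p q kt \<and> isPair S q k t \<and>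
         (\<exists>p'\<in>els S (graph1 S rl sin). \<exists>s2'\<in>els S p'. \<exists>s\<in>els S s2'. isPair S p' kt s \<and> s \<in> els S RR \<and>
           (\<exists>p''\<in>els S (graph1 S rl abs). \<exists>s2''\<in>els S p''. \<exists>a\<in>els S s2''. isPair S p'' s a \<and>
              (\<forall>r\<in>els S F. r \<in> els S INV \<longrightarrow> (\<exists>p'''\<in>els S (rel2 S rl (<)). isPair S p''' a r))))))"
  proof (rule bexI[of _ ?k], intro ballI conjI impI)
    show "?k \<in> els S NN" unfolding elsNN by (intro imageI) (simp add: Nats_def)
    fix t assume tF: "t \<in> els S F"
    show "?k \<noteq> t" using K(1) tF unfolding X_def by auto
    assume "t \<in> els S RR"
    then obtain x where x: "t = ?r x" unfolding elsRR by auto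
    have xX: "x \<in> X" using tF x unfolding X_def by simp
    obtain q where q: "isPair S q ?k t" using pair_exists[OF ssS r0 r0] x by blast
    have q2: "q \<in> lev S 2" using isPair_lev[OF q] r0 x by (simp add: numeral_2_eq_2)
    have r2: "?r y \<in> lev S 2" for y using r0 lev_mono[of 0 2 S] by blast
    obtain p where p: "isPair S p q (?r (real K * x))" using pair_exists[OF ssS q2 r2] by blast
    have pG: "p \<in> els S (graph2 S rl (*))" unfolding G2 using q p x by blast
    obtain s1 s2 where s12: "s1 \<in> els S p" "q \<in> els S s1" "s2 \<in> els S p" "?r (real K * x) \<in> els S s2"
      using isPair_mem[OF p] by blast
    obtain p' where p': "isPair S p' (?r (real K * x)) (?r (sin (real K * x)))"
      using pair_exists[OF ssS r0 r0] by blast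
    have p'G: "p' \<in> els S (graph1 S rl sin)" unfolding G1 using p' by blast
    obtain s2' where s2': "s2' \<in> els S p'" "?r (sin (real K * x)) \<in> els S s2'" using isPair_mem[OF p'] by blast
    obtain p'' where p'': "isPair S p'' (?r (sin (real K * x))) (?r \<bar>sin (real K * x)\<bar>)"
      using pair_exists[OF ssS r0 r0] by blast
    have p''G: "p'' \<in> els S (graph1 S rl abs)" unfolding G1 using p'' by blast
    obtain s2'' where s2'': "s2'' \<in> els S p''" "?r \<bar>sin (real K * x)\<bar> \<in> els S s2''" using isPair_mem[OF p''] by blast
    have final: "\<exists>p'''\<in>els S (rel2 S rl (<)). isPair S p''' (?r \<bar>sin (real K * x)\<bar>) r"
      if r: "r \<in> els S F" "r \<in> els S INV" for r
    proof -
      obtain n :: nat where n: "n \<ge> 1" "r = ?r (1 / real n)" using r(2) unfolding elsINV by blast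
      have "1 / real n \<in> X" using r(1) n unfolding X_def by simp
      hence lt: "\<bar>sin (real K * x)\<bar> < 1 / real n" using K(2)[OF xX] n(1) by simp
      obtain p''' where p''': "isPair S p''' (?r \<bar>sin (real K * x)\<bar>) r" using pair_exists[OF ssS r0 r0] n by blast
      have "p''' \<in> els S (rel2 S rl (<))" unfolding Lt using p''' lt n by blast
      thus ?thesis using p''' by blast
    qed
    show "\<exists>p\<in>els S (graph2 S rl (*)). \<exists>s1\<in>els S p. \<exists>q\<in>els S s1. \<exists>s2\<in>els S p. \<exists>kt\<in>els S s2.
         isPair S p q kt \<and> isPair S q ?k t \<and>
         (\<exists>p'\<in>els S (graph1 S rl sin). \<exists>s2'\<in>els S p'. \<exists>s\<in>els S s2'. isPair S p' kt s \<and> s \<in> els S RR \<and>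
           (\<exists>p''\<in>els S (graph1 S rl abs). \<exists>s2''\<in>els S p''. \<exists>a\<in>els S s2''. isPair S p'' s a \<and>
              (\<forall>r\<in>els S F. r \<in> els S INV \<longrightarrow> (\<exists>p'''\<in>els S (rel2 S rl (<)). isPair S p''' a r))))"
      apply (rule bexI[OF _ pG], rule bexI[OF _ s12(1)], rule bexI[OF _ s12(2)], rule bexI[OF _ s12(3)], rule bexI[OF _ s12(4)])
      apply (intro conjI p q)
      apply (rule bexI[OF _ p'G], rule bexI[OF _ s2'(1)], rule bexI[OF _ s2'(2)])
      apply (intro conjI p')
       apply (simp add: elsRR)
      apply (rule bexI[OF _ p''G], rule bexI[OF _ s2''(1)], rule bexI[OF _ s2''(2)])
      apply (intro conjI p'' ballI impI final)
      by assumption+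
  qed
qed



lemma mem_transfer:
  assumes tr: "\<forall>\<phi> env. sat S env \<phi> \<longleftrightarrow> sat T (star \<circ> env) (map_fm star \<phi>)"
  shows "x \<in> els S y \<longleftrightarrow> star x \<in> els T (star y)"
  using tr[rule_format, of "\<lambda>_. x" "Mem (Cst x) (Cst y)"] by simp

theorem mainTheorem11:
  fixes S :: "('a, 'v) sstr" and T :: "('a, 'w) sstr"
    and star :: "'v \<Rightarrow> 'w" and rl :: "real \<Rightarrow> 'a"
  assumes "nonstandard_universe S T star rl"
    and "enlargement S T star"
  shows "\<exists>k \<in> starNat S T star rl.
           (\<forall>n::nat. k \<noteq> atm T (rl (real n))) \<and>
           (\<forall>t::real. \<exists>kt s. starApp2 S T star rl (*) k (atm T (rl t)) kt \<and>
                            starApp1 S T star rl sin kt s \<and>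
                            infinitesimal S T star rl s)"
proof -
  note nu = assms(1)[unfolded nonstandard_universe_def]
  have ssS: "superstructure S" using nu by (elim conjE)
  have ssT: "superstructure T" using nu by (elim conjE)
  have injrl: "inj rl" using nu by (elim conjE)
  have rlb: "range rl \<subseteq> base S" using nu by (elim conjE)
  have statm: "\<forall>x \<in> base S. star (atm S x) = atm T x" using nu by (elim conjE)
  have tr: "\<forall>\<phi> env. sat S env \<phi> \<longleftrightarrow> sat T (star \<circ> env) (map_fm star \<phi>)" using nu by (elim conjE)
  note mt = mem_transfer[OF tr]
  have st: "star (atm S (rl x)) = atm T (rl x)" for x using statm rlb by auto
  define NN where "NN = code S (atm S ` rl ` \<nat>)"
  define RR where "RR = code S (atm S ` range rl)"
  define INV where "INV = code S (atm S ` rl ` {y. \<exists>n::nat. n \<ge> 1 \<and> y = 1 / real n})"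
  have RRc: "\<not> isAtom S RR \<and> els S RR = atm S ` range rl" unfolding RR_def
    using rlb by (intro code_els[OF ssS, of _ 0]) auto
  have elsINV: "els S INV = atm S ` rl ` {y. \<exists>n::nat. n \<ge> 1 \<and> y = 1 / real n}"
    unfolding INV_def using rlb by (intro els_code_atoms[OF ssS]) auto
  obtain B where hB: "hyperfinite S T star B" and B: "star ` els S RR \<subseteq> els T B"
    using assms(2) RRc unfolding enlargement_def by blast
  obtain A' where A': "\<not> isAtom S A'"
    and BPF: "B \<in> els T (star (code S {s. \<not> isAtom S s \<and> finite (els S s) \<and> els S s \<subseteq> els S A'}))"
    using hB unfolding hyperfinite_def by blast
  define PF where "PF = code S {s. \<not> isAtom S s \<and> finite (els S s) \<and> els S s \<subseteq> els S A'}"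
  have "sat S (\<lambda>_. undefined) (bigF PF NN RR (graph2 S rl (*)) (graph1 S rl sin) (graph1 S rl abs) (rel2 S rl (<)) INV)"
    unfolding PF_def NN_def RR_def INV_def by (rule std_side[OF ssS rlb injrl A'])
  hence "sat T (star \<circ> (\<lambda>_. undefined)) (bigF (star PF) (star NN) (star RR) (star (graph2 S rl (*)))
     (star (graph1 S rl sin)) (star (graph1 S rl abs)) (star (rel2 S rl (<))) (star INV))"
    using tr by (simp add: map_bigF)
  hence T: "\<forall>F\<in>els T (star PF). \<exists>k\<in>els T (star NN). \<forall>t\<in>els T F. k \<noteq> t \<and> (t \<in> els T (star RR) \<longrightarrow>
      (\<exists>p\<in>els T (star (graph2 S rl (*))). \<exists>s1\<in>els T p. \<exists>q\<in>els T s1. \<exists>s2\<in>els T p. \<exists>kt\<in>els T s2.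
         isPair T p q kt \<and> isPair T q k t \<and>
         (\<exists>p'\<in>els T (star (graph1 S rl sin)). \<exists>s2'\<in>els T p'. \<exists>s\<in>els T s2'. isPair T p' kt s \<and> s \<in> els T (star RR) \<and>
           (\<exists>p''\<in>els T (star (graph1 S rl abs)). \<exists>s2''\<in>els T p''. \<exists>a\<in>els T s2''. isPair T p'' s a \<and>
              (\<forall>r\<in>els T F. r \<in> els T (star INV) \<longrightarrow> (\<exists>p'''\<in>els T (star (rel2 S rl (<))). isPair T p''' a r))))))"
    by (subst (asm) sat_bigF) (erule ss_atoms_empty[OF ssT])
  from T BPF[folded PF_def] obtain k where k: "k \<in> els T (star NN)" and
    kB: "\<forall>t\<in>els T B. k \<noteq> t \<and> (t \<in> els T (star RR) \<longrightarrow>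
      (\<exists>p\<in>els T (star (graph2 S rl (*))). \<exists>s1\<in>els T p. \<exists>q\<in>els T s1. \<exists>s2\<in>els T p. \<exists>kt\<in>els T s2.
         isPair T p q kt \<and> isPair T q k t \<and>
         (\<exists>p'\<in>els T (star (graph1 S rl sin)). \<exists>s2'\<in>els T p'. \<exists>s\<in>els T s2'. isPair T p' kt s \<and> s \<in> els T (star RR) \<and>
           (\<exists>p''\<in>els T (star (graph1 S rl abs)). \<exists>s2''\<in>els T p''. \<exists>a\<in>els T s2''. isPair T p'' s a \<and>
              (\<forall>r\<in>els T B. r \<in> els T (star INV) \<longrightarrow> (\<exists>p'''\<in>els T (star (rel2 S rl (<))). isPair T p''' a r))))))"
    by blast
  have inB: "atm T (rl x) \<in> els T B" for x
  proof -
    have "atm S (rl x) \<in> els S RR" using RRc by simp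
    hence "star (atm S (rl x)) \<in> els T B" using B by blast
    thus ?thesis by (simp add: st)
  qed
  have inRR: "atm T (rl x) \<in> els T (star RR)" for x
    using mt[of "atm S (rl x)" RR] RRc st[of x] by simp
  show ?thesis
  proof (rule bexI[of _ k], intro conjI allI)
    show "k \<in> starNat S T star rl" using k unfolding starNat_def NN_def .
    fix n :: nat show "k \<noteq> atm T (rl (real n))" using kB inB by blast
  next
    fix t :: real
    note E = mp[OF conjunct2[OF bspec[OF kB inB[of t]]] inRR[of t]]
    obtain p q kt p' s p'' a where
      w: "p\<in>els T (star (graph2 S rl (*)))" "isPair T p q kt" "isPair T q k (atm T (rl t))"
        "p'\<in>els T (star (graph1 S rl sin))" "isPair T p' kt s" "s \<in> els T (star RR)"
        "p''\<in>els T (star (graph1 S rl abs))" "isPair T p'' s a"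
        "\<forall>r\<in>els T B. r \<in> els T (star INV) \<longrightarrow> (\<exists>p'''\<in>els T (star (rel2 S rl (<))). isPair T p''' a r)"
      using E apply (elim bexE conjE) apply (rule that) by assumption+
    show "\<exists>kt s. starApp2 S T star rl (*) k (atm T (rl t)) kt \<and>
                starApp1 S T star rl sin kt s \<and> infinitesimal S T star rl s"
    proof (intro exI conjI)
      show "starApp2 S T star rl (*) k (atm T (rl t)) kt" unfolding starApp2_def using w by blast
      show "starApp1 S T star rl sin kt s" unfolding starApp1_def using w by blast
      show "infinitesimal S T star rl s" unfolding infinitesimal_def
      proof (intro conjI allI impI)
        show "s \<in> starReal S T star rl" using w(6) unfolding starReal_def RR_def .
        fix n :: nat assume n: "n \<ge> 1"
        have "atm S (rl (1 / real n)) \<in> els S INV" unfolding elsINV using n by blast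
        hence "atm T (rl (1 / real n)) \<in> els T (star INV)" using mt st by metis
        then obtain p''' where "p'''\<in>els T (star (rel2 S rl (<)))" "isPair T p''' a (atm T (rl (1 / real n)))"
          using w(9) inB by blast
        thus "\<exists>a. starApp1 S T star rl abs s a \<and> starRel S T star rl (<) a (atm T (rl (1 / real n)))"
          unfolding starApp1_def starRel_def using w by blast
      qed
    qed
  qed
qed

end
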